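(* Let $S\subset\mathbb P^2\times\mathbb P^2$ be a smooth K3 surface over $\overline{\mathbb Q}$ which is the intersection of a hypersurface of bidegree $(1,1)$ and a hypersurface of bidegree $(2,2)$. For $i=1,2$ let $p_i\colon S\to\mathbb P^2$ be the $i$-th projection (a double cover) with associated covering involution $\sigma_i$, and $L_i=p_i^*\mathcal O_{\mathbb P^2}(1)$; put $L=L_1+L_2$, which satisfies $\sigma_1^*L+\sigma_2^*L\cong 4L$. Let $E^+=(2+\sqrt3)L_1-L_2$ and $E^-=-L_1+(2+\sqrt3)L_2$ in $\operatorname{Pic}(S)\otimes\mathbb R$. Let $\widehat h^+$ be the unique function $S(\overline{\mathbb Q})\to\mathbb R$ with $\widehat h^+=h_{E^+}+O(1)$ and $\widehat h^+\circ(\sigma_2\circ\sigma_1)=(7+4\sqrt3)\widehat h^+$, and $\widehat h^-$ the unique function with $\widehat h^-=h_{E^-}+O(1)$ and $\widehat h^-\circ(\sigma_1\circ\sigma_2)=(7+4\sqrt3)\widehat h^-$; set $\widehat h_{Sil}=\widehat h^++\widehat h^-$. Then $\widehat h_{Sil}=(1+\sqrt3)\,\widehat h_{L,\{\sigma_1,\sigma_2\}}$.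
   Context: For a projective variety $X$ over a number field, morphisms $f_1,\dots,f_k\colon X\to X$, and $L\in\operatorname{Pic}(X)\otimes\mathbb R$ with $\sum_i f_i^*L\cong dL$, $d>k$, the canonical height $\widehat h_{L,\{f_1,\dots,f_k\}}$ is the unique function $X(\overline{\mathbb Q})\to\mathbb R$ with $\widehat h=h_L+O(1)$ and $\sum_i\widehat h(f_i(x))=d\,\widehat h(x)$ for all $x$. Here $h_M$ denotes a Weil height associated with $M\in\operatorname{Pic}\otimes\mathbb R$ (well-defined up to bounded functions). *)

theory Defs
  imports "HOL-Analysis.Analysis" "HOL-Computational_Algebra.Polynomial"
begin

text \<open>Qbar is modelled as the algebraic complex numbers. A point of P^2(Qbar) is
represented by its unique normalised coordinate vector (x 0, x 1, x 2) whose first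
nonzero coordinate equals 1; coordinates with index at least 3 are 0.\<close>

definition P2 :: "(nat \<Rightarrow> complex) set" where
  "P2 = {x. (\<forall>i\<ge>3. x i = 0) \<and> (\<forall>i<3. algebraic (x i)) \<and>
            (\<exists>j<3. x j = 1 \<and> (\<forall>i<j. x i = 0))}"

definition is_subfield :: "complex set \<Rightarrow> bool" where
  "is_subfield K \<longleftrightarrow> 0 \<in> K \<and> 1 \<in> K \<and>
     (\<forall>a\<in>K. \<forall>b\<in>K. a + b \<in> K \<and> a - b \<in> K \<and> a * b \<in> K) \<and>
     (\<forall>a\<in>K. a \<noteq> 0 \<longrightarrow> inverse a \<in> K)"

definition gen_field :: "complex set \<Rightarrow> complex set" where
  "gen_field X = \<Inter>{K. is_subfield K \<and> X \<subseteq> K}"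

text \<open>Field embeddings K \<rightarrow> C (extensional, so that there are exactly [K:Q] of them).\<close>
definition embeddings :: "complex set \<Rightarrow> (complex \<Rightarrow> complex) set" where
  "embeddings K = {\<sigma>. (\<forall>a\<in>K. \<forall>b\<in>K. \<sigma> (a + b) = \<sigma> a + \<sigma> b \<and> \<sigma> (a * b) = \<sigma> a * \<sigma> b)
                      \<and> \<sigma> 1 = 1 \<and> (\<forall>a. a \<notin> K \<longrightarrow> \<sigma> a = 0)}"

definition ring_of_integers :: "complex set \<Rightarrow> complex set" where
  "ring_of_integers K = {a \<in> K. algebraic_int a}"

definition ideal_norm :: "complex set \<Rightarrow> complex set \<Rightarrow> nat" where
  "ideal_norm R I = card (R // {(a, b). a \<in> R \<and> b \<in> R \<and> a - b \<in> I})"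

text \<open>For a point x with number field K = Q(x_0,x_1,x_2), choose an integral representative
y = c x (c a positive integer); then
  h(x) = (1/[K:Q]) (sum over embeddings s of log max_i |s(y_i)|  -  log N(y_0,y_1,y_2)),
which is the usual sum over all places of K of n_v log max_i |y_i|_v, divided by [K:Q].\<close>
definition weil_height :: "(nat \<Rightarrow> complex) \<Rightarrow> real" where
  "weil_height x =
    (let K = gen_field (x ` {..<3});
         c = (SOME c :: nat. c > 0 \<and> (\<forall>i<3. algebraic_int (of_nat c * x i)));
         y = (\<lambda>i. of_nat c * x i);
         R = ring_of_integers K;
         I = {\<Sum>i<3. t i * y i | t. \<forall>i<3. t i \<in> R};
         E = embeddings K
     in ((\<Sum>\<sigma>\<in>E. ln (Max ((\<lambda>i. cmod (\<sigma> (y i))) ` {..<3}))) - ln (real (ideal_norm R I)))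
        / real (card E))"

definition form11 :: "(nat \<Rightarrow> nat \<Rightarrow> complex) \<Rightarrow> (nat \<Rightarrow> complex) \<Rightarrow> (nat \<Rightarrow> complex) \<Rightarrow> complex" where
  "form11 a u v = (\<Sum>i<3. \<Sum>j<3. a i j * u i * v j)"

definition form22 :: "(nat \<Rightarrow> nat \<Rightarrow> nat \<Rightarrow> nat \<Rightarrow> complex) \<Rightarrow> (nat \<Rightarrow> complex) \<Rightarrow> (nat \<Rightarrow> complex) \<Rightarrow> complex" where
  "form22 b u v = (\<Sum>i<3. \<Sum>j<3. \<Sum>k<3. \<Sum>l<3. b i j k l * u i * u j * v k * v l)"

definition surf :: "(nat \<Rightarrow> nat \<Rightarrow> complex) \<Rightarrow> (nat \<Rightarrow> nat \<Rightarrow> nat \<Rightarrow> nat \<Rightarrow> complex)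
                    \<Rightarrow> ((nat \<Rightarrow> complex) \<times> (nat \<Rightarrow> complex)) set" where
  "surf a b = {(u, v). u \<in> P2 \<and> v \<in> P2 \<and> form11 a u v = 0 \<and> form22 b u v = 0}"

definition du :: "((nat \<Rightarrow> complex) \<Rightarrow> (nat \<Rightarrow> complex) \<Rightarrow> complex) \<Rightarrow> nat
                  \<Rightarrow> (nat \<Rightarrow> complex) \<Rightarrow> (nat \<Rightarrow> complex) \<Rightarrow> complex" where
  "du F m u v = deriv (\<lambda>t. F (u(m := t)) v) (u m)"

definition dv :: "((nat \<Rightarrow> complex) \<Rightarrow> (nat \<Rightarrow> complex) \<Rightarrow> complex) \<Rightarrow> nat
                  \<Rightarrow> (nat \<Rightarrow> complex) \<Rightarrow> (nat \<Rightarrow> complex) \<Rightarrow> complex" where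
  "dv F m u v = deriv (\<lambda>t. F u (v(m := t))) (v m)"

text \<open>Jacobian criterion: S is a smooth complete intersection (of dimension 2) iff at every
point the gradients of the two defining bihomogeneous forms are linearly independent.\<close>
definition smooth_ci :: "(nat \<Rightarrow> nat \<Rightarrow> complex) \<Rightarrow> (nat \<Rightarrow> nat \<Rightarrow> nat \<Rightarrow> nat \<Rightarrow> complex) \<Rightarrow> bool" where
  "smooth_ci a b \<longleftrightarrow> (\<forall>(u, v) \<in> surf a b. \<forall>c1 c2 :: complex.
      (\<forall>m<3. c1 * du (form11 a) m u v + c2 * du (form22 b) m u v = 0) \<and>
      (\<forall>m<3. c1 * dv (form11 a) m u v + c2 * dv (form22 b) m u v = 0)
      \<longrightarrow> c1 = 0 \<and> c2 = 0)"

definition other_pt :: "'a set \<Rightarrow> 'a \<Rightarrow> 'a" where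
  "other_pt A v = (if \<exists>w\<in>A. w \<noteq> v then THE w. w \<in> A \<and> w \<noteq> v else v)"

text \<open>sigma1 is the covering involution of p1 : S \<rightarrow> P^2, (u,v) \<mapsto> u (swap the two points
of the fibre, fixing ramification points); likewise sigma2 for p2.\<close>
definition sigma1 :: "((nat \<Rightarrow> complex) \<times> (nat \<Rightarrow> complex)) set
     \<Rightarrow> (nat \<Rightarrow> complex) \<times> (nat \<Rightarrow> complex) \<Rightarrow> (nat \<Rightarrow> complex) \<times> (nat \<Rightarrow> complex)" where
  "sigma1 S x = (fst x, other_pt {w. (fst x, w) \<in> S} (snd x))"

definition sigma2 :: "((nat \<Rightarrow> complex) \<times> (nat \<Rightarrow> complex)) set
     \<Rightarrow> (nat \<Rightarrow> complex) \<times> (nat \<Rightarrow> complex) \<Rightarrow> (nat \<Rightarrow> complex) \<times> (nat \<Rightarrow> complex)" where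
  "sigma2 S x = (other_pt {w. (w, snd x) \<in> S} (fst x), snd x)"

definition bdd_diff_on :: "'a set \<Rightarrow> ('a \<Rightarrow> real) \<Rightarrow> ('a \<Rightarrow> real) \<Rightarrow> bool" where
  "bdd_diff_on A f g \<longleftrightarrow> (\<exists>C. \<forall>x\<in>A. \<bar>f x - g x\<bar> \<le> C)"

end

theory Submission
  imports Defs "HOL-Computational_Algebra.Polynomial" "HOL-Analysis.Analysis"
begin


definition qscale :: "rat \<Rightarrow> complex \<Rightarrow> complex" where "qscale q z = of_rat q * z"

interpretation qs: vector_space qscale
  by unfold_locales (auto simp: qscale_def algebra_simps of_rat_add of_rat_mult)

lemma span_mult:
  assumes "s \<in> qs.span X" "t \<in> qs.span Y"
  shows "s * t \<in> qs.span ((\<lambda>(a,b). a * b) ` (X \<times> Y))"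
proof -
  from assms(1) obtain T r where T: "finite T" "T \<subseteq> X" "s = (\<Sum>a\<in>T. qscale (r a) a)"
    unfolding qs.span_explicit by blast
  from assms(2) obtain T' r' where T': "finite T'" "T' \<subseteq> Y" "t = (\<Sum>b\<in>T'. qscale (r' b) b)"
    unfolding qs.span_explicit by blast
  have "s * t = (\<Sum>a\<in>T. \<Sum>b\<in>T'. qscale (r a * r' b) (a * b))"
    unfolding T(3) T'(3) sum_product by (simp add: qscale_def of_rat_mult algebra_simps)
  also have "\<dots> \<in> qs.span ((\<lambda>(a,b). a * b) ` (X \<times> Y))"
    using T T' by (intro qs.span_sum qs.span_scale qs.span_base) auto
  finally show ?thesis .
qed

lemma powers_span_imp_algebraic:
  assumes B: "finite B" and sp: "\<And>k. z ^ k \<in> qs.span B"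
  shows "algebraic z"
proof (cases "\<exists>i j. i < j \<and> z ^ i = z ^ j")
  case True
  then obtain i j where ij: "i < j" "z ^ i = z ^ j" by blast
  let ?p = "monom (1::complex) j - monom 1 i"
  show ?thesis
  proof (rule algebraicI)
    show "coeff ?p k \<in> \<int>" for k by (auto simp: coeff_monom)
    have "coeff ?p j = 1" using ij by (simp add: coeff_monom)
    then show "?p \<noteq> 0" by (metis coeff_0 zero_neq_one)
    show "poly ?p z = 0" using ij by (simp add: poly_monom)
  qed
next
  case False
  then have inj: "inj (\<lambda>k. z ^ k)" unfolding inj_def by (metis linorder_neqE_nat)
  define N where "N = card B"
  define A where "A = (\<lambda>k. z ^ k) ` {..N}"
  have cardA: "card A = Suc N" unfolding A_def using inj
    by (simp add: card_image inj_on_subset)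
  have "A \<subseteq> qs.span B" unfolding A_def using sp by auto
  then have "qs.dependent A"
    using qs.independent_span_bound[OF B, of A] cardA N_def by auto
  then obtain u where u: "\<exists>v\<in>A. u v \<noteq> 0" "(\<Sum>v\<in>A. qscale (u v) v) = 0"
    using qs.dependent_finite[of A] unfolding A_def by auto
  define p where "p = (\<Sum>k\<le>N. monom (of_rat (u (z ^ k)) :: complex) k)"
  have cp: "coeff p k = (if k \<le> N then of_rat (u (z ^ k)) else 0)" for k
    unfolding p_def by (simp add: coeff_sum coeff_monom)
  show ?thesis
  proof (rule algebraicI')
    show "coeff p k \<in> \<rat>" for k using cp by auto
    from u(1) obtain k where "k \<le> N" "u (z ^ k) \<noteq> 0" unfolding A_def by auto
    then have "coeff p k \<noteq> 0" using cp by simp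
    then show "p \<noteq> 0" by auto
    have "poly p z = (\<Sum>k\<le>N. qscale (u (z ^ k)) (z ^ k))"
      unfolding p_def by (simp add: poly_sum poly_monom qscale_def)
    also have "\<dots> = (\<Sum>v\<in>A. qscale (u v) v)"
      unfolding A_def by (subst sum.reindex) (use inj in \<open>auto intro: inj_on_subset\<close>)
    finally show "poly p z = 0" using u(2) by simp
  qed
qed

lemma algebraic_powers_span:
  fixes x :: complex
  assumes "algebraic x"
  shows "\<exists>B. finite B \<and> (\<forall>k. x ^ k \<in> qs.span B)"
proof -
  from assms obtain p where p: "\<And>i. coeff p i \<in> \<rat>" "p \<noteq> 0" "poly p x = 0"
    unfolding algebraic_altdef by blast
  define rc where "rc i = (SOME q. coeff p i = of_rat q)" for i
  have rc: "coeff p i = of_rat (rc i)" for i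
    unfolding rc_def by (rule someI_ex) (use p(1)[of i] in \<open>auto elim: Rats_cases\<close>)
  define n where "n = degree p"
  define B where "B = (\<lambda>i. x ^ i) ` {..<n}"
  have lc: "lead_coeff p \<noteq> 0" using p by simp
  then have lcr: "rc n \<noteq> 0" using rc[of n] n_def by auto
  have "poly p x = (\<Sum>i\<le>n. coeff p i * x ^ i)" unfolding n_def by (simp add: poly_altdef)
  also have "\<dots> = (\<Sum>i<n. coeff p i * x ^ i) + lead_coeff p * x ^ n"
    unfolding n_def by (simp add: lessThan_Suc_atMost[symmetric])
  finally have eq0: "(\<Sum>i<n. coeff p i * x ^ i) + coeff p n * x ^ n = 0"
    using p(3) n_def by simp
  have eq: "x ^ n = (\<Sum>i<n. qscale (- rc i / rc n) (x ^ i))"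
  proof -
    have "(\<Sum>i<n. qscale (- rc i / rc n) (x ^ i)) = - (\<Sum>i<n. coeff p i * x ^ i) / coeff p n"
      unfolding qscale_def rc by (simp add: sum_divide_distrib sum_negf[symmetric] of_rat_divide of_rat_minus)
    also have "\<dots> = x ^ n"
    proof -
      have "coeff p n * x ^ n = - (\<Sum>i<n. coeff p i * x ^ i)"
        using eq0 by (simp add: eq_neg_iff_add_eq_0 add.commute)
      then show ?thesis using lc n_def by (simp add: field_simps)
    qed
    finally show ?thesis by simp
  qed
  have "x ^ k \<in> qs.span B" for k
  proof (induction k rule: less_induct)
    case (less k)
    show ?case
    proof (cases "k < n")
      case True then show ?thesis unfolding B_def by (intro qs.span_base) auto
    next
      case False
      then have "x ^ k = x ^ (k - n) * x ^ n" by (simp add: power_add[symmetric])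
      also have "\<dots> = (\<Sum>i<n. qscale (- rc i / rc n) (x ^ (k - n + i)))"
        unfolding eq sum_distrib_left by (simp add: qscale_def power_add algebra_simps)
      also have "\<dots> \<in> qs.span B"
      proof (intro qs.span_sum qs.span_scale)
        fix i assume "i \<in> {..<n}"
        then have "k - n + i < k" using False by auto
        then show "x ^ (k - n + i) \<in> qs.span B" by (rule less.IH)
      qed
      finally show ?thesis .
    qed
  qed
  then show ?thesis unfolding B_def by blast
qed

lemma algebraic_plus:
  fixes x y :: complex
  assumes "algebraic x" "algebraic y" shows "algebraic (x + y)"
proof -
  obtain X where X: "finite X" "\<And>k. x ^ k \<in> qs.span X" using algebraic_powers_span[OF assms(1)] by blast
  obtain Y where Y: "finite Y" "\<And>k. y ^ k \<in> qs.span Y" using algebraic_powers_span[OF assms(2)] by blast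
  let ?B = "(\<lambda>(a,b). a * b) ` (X \<times> Y)"
  show ?thesis
  proof (rule powers_span_imp_algebraic)
    show "finite ?B" using X Y by auto
    fix k
    have "(x + y) ^ k = (\<Sum>i\<le>k. qscale (of_nat (k choose i)) (x ^ i * y ^ (k - i)))"
      by (simp add: binomial_ring qscale_def algebra_simps)
    also have "\<dots> \<in> qs.span ?B"
      by (intro qs.span_sum qs.span_scale span_mult X Y)
    finally show "(x + y) ^ k \<in> qs.span ?B" .
  qed
qed

lemma algebraic_times:
  fixes x y :: complex
  assumes "algebraic x" "algebraic y" shows "algebraic (x * y)"
proof -
  obtain X where X: "finite X" "\<And>k. x ^ k \<in> qs.span X" using algebraic_powers_span[OF assms(1)] by blast
  obtain Y where Y: "finite Y" "\<And>k. y ^ k \<in> qs.span Y" using algebraic_powers_span[OF assms(2)] by blast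
  let ?B = "(\<lambda>(a,b). a * b) ` (X \<times> Y)"
  show ?thesis
  proof (rule powers_span_imp_algebraic)
    show "finite ?B" using X Y by auto
    fix k
    show "(x * y) ^ k \<in> qs.span ?B" unfolding power_mult_distrib by (intro span_mult X Y)
  qed
qed

lemma algebraic_sum: fixes f :: "'a \<Rightarrow> complex" shows "(\<And>i. i \<in> A \<Longrightarrow> algebraic (f i)) \<Longrightarrow> algebraic (sum f A)"
  by (induction A rule: infinite_finite_induct) (auto intro: algebraic_plus)

lemma algebraic_diff: fixes x y :: complex shows "algebraic x \<Longrightarrow> algebraic y \<Longrightarrow> algebraic (x - y)"
  using algebraic_plus[of x "-y"] by auto

lemma algebraic_divide: fixes x y :: complex shows "algebraic x \<Longrightarrow> algebraic y \<Longrightarrow> algebraic (x / y)"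
  using algebraic_times[of x "inverse y"] by (auto simp: divide_inverse)

lemma algebraic_of_nat [simp]: "algebraic (of_nat n :: complex)"
  by (rule rat_imp_algebraic) auto



lemma decay_zero:
  fixes f :: "'a \<Rightarrow> real"
  assumes B: "\<forall>x\<in>S. \<bar>f x\<bar> \<le> B"
    and step: "\<And>C. (\<forall>x\<in>S. \<bar>f x\<bar> \<le> C) \<Longrightarrow> (\<forall>x\<in>S. \<bar>f x\<bar> \<le> C / 2)"
  shows "\<forall>x\<in>S. f x = 0"
proof
  fix x assume x: "x \<in> S"
  have n: "\<forall>y\<in>S. \<bar>f y\<bar> \<le> B / 2 ^ n" for n
  proof (induction n)
    case 0 then show ?case using B by simp
  next
    case (Suc n)
    from step[OF Suc] show ?case by (simp add: field_simps)
  qed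
  show "f x = 0"
  proof (rule ccontr)
    assume "f x \<noteq> 0"
    then have pos: "\<bar>f x\<bar> > 0" by simp
    obtain n where "B / \<bar>f x\<bar> < 2 ^ n" using real_arch_pow[of 2 "B / \<bar>f x\<bar>"] by auto
    then have "B < 2 ^ n * \<bar>f x\<bar>" using pos by (simp add: field_simps)
    then have "B / 2 ^ n < \<bar>f x\<bar>" by (simp add: field_simps)
    with n[of n] x show False by force
  qed
qed

lemma decay_mult:
  fixes g :: "'a \<Rightarrow> real"
  assumes B: "\<forall>x\<in>S. \<bar>g x\<bar> \<le> B" and T: "\<forall>x\<in>S. T x \<in> S"
    and eq: "\<forall>x\<in>S. g (T x) = l * g x" and l: "l \<ge> 2"
  shows "\<forall>x\<in>S. g x = 0"
proof (rule decay_zero[OF B])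
  fix C assume C: "\<forall>x\<in>S. \<bar>g x\<bar> \<le> C"
  show "\<forall>x\<in>S. \<bar>g x\<bar> \<le> C / 2"
  proof
    fix x assume x: "x \<in> S"
    have "l * \<bar>g x\<bar> = \<bar>g (T x)\<bar>" using eq x l by (simp add: abs_mult)
    also have "\<dots> \<le> C" using C T x by blast
    finally have "l * \<bar>g x\<bar> \<le> C" .
    moreover have "2 * \<bar>g x\<bar> \<le> l * \<bar>g x\<bar>" using l by (intro mult_right_mono) auto
    ultimately show "\<bar>g x\<bar> \<le> C / 2" by simp
  qed
qed

lemma decay_sum:
  fixes g :: "'a \<Rightarrow> real"
  assumes B: "\<forall>x\<in>S. \<bar>g x\<bar> \<le> B" and T: "\<forall>x\<in>S. s1 x \<in> S" "\<forall>x\<in>S. s2 x \<in> S"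
    and eq: "\<forall>x\<in>S. g (s1 x) + g (s2 x) = 4 * g x"
  shows "\<forall>x\<in>S. g x = 0"
proof (rule decay_zero[OF B])
  fix C assume C: "\<forall>x\<in>S. \<bar>g x\<bar> \<le> C"
  show "\<forall>x\<in>S. \<bar>g x\<bar> \<le> C / 2"
  proof
    fix x assume x: "x \<in> S"
    have "\<bar>g (s1 x)\<bar> \<le> C" "\<bar>g (s2 x)\<bar> \<le> C" using C T x by blast+
    moreover have "4 * g x = g (s1 x) + g (s2 x)" using eq x by simp
    ultimately show "\<bar>g x\<bar> \<le> C / 2" by linarith
  qed
qed

lemma abstract_main:
  fixes H V hp hm hc :: "'a \<Rightarrow> real"
  assumes sAS: "\<forall>x\<in>S. sA x \<in> S" and sBS: "\<forall>x\<in>S. sB x \<in> S"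
    and s11: "\<forall>x\<in>S. sA (sA x) = x" and s22: "\<forall>x\<in>S. sB (sB x) = x"
    and Hs1: "\<forall>x\<in>S. H (sA x) = H x" and Vs2: "\<forall>x\<in>S. V (sB x) = V x"
    and hp_ht: "\<exists>C. \<forall>x\<in>S. \<bar>hp x - ((2 + sqrt 3) * H x - V x)\<bar> \<le> C"
    and hp_eq: "\<forall>x\<in>S. hp (sB (sA x)) = (7 + 4 * sqrt 3) * hp x"
    and hm_ht: "\<exists>C. \<forall>x\<in>S. \<bar>hm x - (- H x + (2 + sqrt 3) * V x)\<bar> \<le> C"
    and hm_eq: "\<forall>x\<in>S. hm (sA (sB x)) = (7 + 4 * sqrt 3) * hm x"
    and hc_ht: "\<exists>C. \<forall>x\<in>S. \<bar>hc x - (H x + V x)\<bar> \<le> C"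
    and hc_eq: "\<forall>x\<in>S. hc (sA x) + hc (sB x) = 4 * hc x"
  shows "\<forall>x\<in>S. hp x + hm x = (1 + sqrt 3) * hc x"
proof -
  define r where "r = sqrt 3"
  have r2: "r * r = 3" unfolding r_def by simp
  have r0: "r > 0" unfolding r_def by simp
  have r1: "r < 2"
  proof -
    have "sqrt 3 < sqrt 4" by (rule real_sqrt_less_mono) simp
    moreover have "sqrt 4 = (2::real)" using real_sqrt_abs[of 2] by simp
    ultimately show ?thesis unfolding r_def by simp
  qed
  have r1': "r > 1" unfolding r_def by (simp add: real_less_rsqrt)
  define l where "l = 7 + 4 * r"
  define al where "al = 2 + r"
  define be where "be = 2 - r"
  have be0: "be > 0" "be < 1" unfolding be_def using r1 r1' by auto
  have albe: "al * be = 1" unfolding al_def be_def using r2 by (simp add: algebra_simps)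
  have lal: "l = al * al" unfolding l_def al_def using r2 by (simp add: algebra_simps)
  have bel: "be * (1 + l) = 4" unfolding l_def be_def using r2 by (simp add: algebra_simps)
  have l2: "l \<ge> 2" unfolding l_def using r0 by simp
  obtain Cp where Cp: "\<forall>x\<in>S. \<bar>hp x - (al * H x - V x)\<bar> \<le> Cp" using hp_ht unfolding al_def r_def by blast
  obtain Cm where Cm: "\<forall>x\<in>S. \<bar>hm x - (- H x + al * V x)\<bar> \<le> Cm" using hm_ht unfolding al_def r_def by blast
  obtain Cc where Cc: "\<forall>x\<in>S. \<bar>hc x - (H x + V x)\<bar> \<le> Cc" using hc_ht by blast
  have hpe: "\<forall>x\<in>S. hp (sB (sA x)) = l * hp x" using hp_eq unfolding l_def r_def by simp
  have hme: "\<forall>x\<in>S. hm (sA (sB x)) = l * hm x" using hm_eq unfolding l_def r_def by simp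
  define ep where "ep x = hp x - (al * H x - V x)" for x
  define em where "em x = hm x - (- H x + al * V x)" for x
  define ec where "ec x = hc x - (H x + V x)" for x
  have ep: "\<forall>x\<in>S. \<bar>ep x\<bar> \<le> Cp" using Cp ep_def by simp
  have em: "\<forall>x\<in>S. \<bar>em x\<bar> \<le> Cm" using Cm em_def by simp
  have ec: "\<forall>x\<in>S. \<bar>ec x\<bar> \<le> Cc" using Cc ec_def by simp
  define D1 where "D1 x = V x + V (sA x) - 4 * H x" for x
  define D2 where "D2 x = H x + H (sB x) - 4 * V x" for x
  have D12: "\<bar>D1 x + D2 x\<bar> \<le> 6 * Cc" if x: "x \<in> S" for x
  proof -
    have "D1 x + D2 x = 4 * ec x - ec (sA x) - ec (sB x)"
      using hc_eq x Hs1 Vs2 sAS sBS unfolding D1_def D2_def ec_def by (auto simp: algebra_simps)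
    moreover have "\<bar>ec x\<bar> \<le> Cc" "\<bar>ec (sA x)\<bar> \<le> Cc" "\<bar>ec (sB x)\<bar> \<le> Cc" using ec x sAS sBS by blast+
    ultimately show ?thesis by linarith
  qed
  define K1 where "K1 = (l * Cp + Cp + al * (6 * Cc)) / (l - al)"
  have lal_pos: "l - al > 0" unfolding l_def al_def using r0 by simp
  have D1b: "\<bar>D1 x\<bar> \<le> K1" if x: "x \<in> S" for x
  proof -
    define y where "y = sA x"
    have y: "y \<in> S" using sAS x y_def by blast
    have Hy: "H y = H x" using Hs1 x y_def by simp
    have s1y: "sA y = x" using s11 x y_def by simp
    have Vs2y: "V (sB y) = V y" using Vs2 y by simp
    have id1: "l * D1 x + al * D2 y = l * ep x - ep (sB y) + (hp (sB y) - l * hp x)"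
    proof -
      have "hp (sB y) = ep (sB y) + al * H (sB y) - V y" unfolding ep_def using Vs2y by simp
      moreover have "H (sB y) = D2 y - H x + 4 * V y" unfolding D2_def using Hy by simp
      moreover have "V y = D1 x - V x + 4 * H x" unfolding D1_def y_def by simp
      moreover have "hp x = ep x + al * H x - V x" unfolding ep_def by simp
      ultimately show ?thesis unfolding l_def al_def using r2 by algebra
    qed
    have eqh: "hp (sB y) = l * hp x" using hpe x y_def by simp
    have D1y: "D1 y = D1 x" unfolding D1_def using s1y Hy y_def by simp
    have "(l - al) * D1 x = (l * D1 x + al * D2 y) - al * (D1 y + D2 y)"
      using D1y by (simp add: algebra_simps)
    also have "\<dots> = l * ep x - ep (sB y) - al * (D1 y + D2 y)" using id1 eqh by simp
    finally have e: "(l - al) * D1 x = l * ep x - ep (sB y) - al * (D1 y + D2 y)" .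
    have "\<bar>l * ep x\<bar> \<le> l * Cp" using ep x l2 by (simp add: abs_mult mult_left_mono)
    moreover have "\<bar>ep (sB y)\<bar> \<le> Cp" using ep sBS y by blast
    moreover have "\<bar>al * (D1 y + D2 y)\<bar> \<le> al * (6 * Cc)"
      using D12[OF y] r0 unfolding al_def by (simp add: abs_mult mult_left_mono)
    ultimately have "\<bar>(l - al) * D1 x\<bar> \<le> l * Cp + Cp + al * (6 * Cc)" unfolding e by linarith
    then have "(l - al) * \<bar>D1 x\<bar> \<le> l * Cp + Cp + al * (6 * Cc)" using lal_pos by (simp add: abs_mult)
    then show ?thesis unfolding K1_def using lal_pos by (simp add: field_simps)
  qed
  have D2b: "\<bar>D2 x\<bar> \<le> K1 + 6 * Cc" if x: "x \<in> S" for x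
    using D1b[OF x] D12[OF x] by linarith
  define g where "g x = hp (sA x) - be * hm x" for x
  have gb: "\<forall>x\<in>S. \<bar>g x\<bar> \<le> K1 + Cp + Cm"
  proof
    fix x assume x: "x \<in> S"
    have "g x = - D1 x + ep (sA x) - be * em x"
      unfolding g_def ep_def em_def D1_def using Hs1 x albe unfolding al_def be_def
      by (simp add: algebra_simps)
    moreover have "\<bar>be * em x\<bar> \<le> Cm"
    proof -
      have "\<bar>be * em x\<bar> = be * \<bar>em x\<bar>" using be0 by (simp add: abs_mult)
      also have "\<dots> \<le> \<bar>em x\<bar>" using be0 by (simp add: mult_left_le_one_le)
      finally show ?thesis using em x order_trans by blast
    qed
    moreover have "\<bar>ep (sA x)\<bar> \<le> Cp" using ep sAS x by blast
    ultimately show "\<bar>g x\<bar> \<le> K1 + Cp + Cm" using D1b[OF x] by linarith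
  qed
  have g0: "\<forall>x\<in>S. g x = 0"
  proof (rule decay_mult[OF gb _ _ l2])
    show "\<forall>x\<in>S. sA (sB x) \<in> S" using sAS sBS by blast
    show "\<forall>x\<in>S. g (sA (sB x)) = l * g x"
    proof
      fix x assume x: "x \<in> S"
      have "hp (sB x) = l * hp (sA x)" using hpe sAS s11 x by metis
      then show "g (sA (sB x)) = l * g x"
        unfolding g_def using s11 sBS x hme by (simp add: algebra_simps)
    qed
  qed
  define g' where "g' x = hm (sB x) - be * hp x" for x
  have gb': "\<forall>x\<in>S. \<bar>g' x\<bar> \<le> K1 + 6 * Cc + Cm + Cp"
  proof
    fix x assume x: "x \<in> S"
    have "g' x = - D2 x + em (sB x) - be * ep x"
      unfolding g'_def ep_def em_def D2_def using Vs2 x albe unfolding al_def be_def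
      by (simp add: algebra_simps)
    moreover have "\<bar>be * ep x\<bar> \<le> Cp"
    proof -
      have "\<bar>be * ep x\<bar> = be * \<bar>ep x\<bar>" using be0 by (simp add: abs_mult)
      also have "\<dots> \<le> \<bar>ep x\<bar>" using be0 by (simp add: mult_left_le_one_le)
      finally show ?thesis using ep x order_trans by blast
    qed
    moreover have "\<bar>em (sB x)\<bar> \<le> Cm" using em sBS x by blast
    ultimately show "\<bar>g' x\<bar> \<le> K1 + 6 * Cc + Cm + Cp" using D2b[OF x] by linarith
  qed
  have g0': "\<forall>x\<in>S. g' x = 0"
  proof (rule decay_mult[OF gb' _ _ l2])
    show "\<forall>x\<in>S. sB (sA x) \<in> S" using sAS sBS by blast
    show "\<forall>x\<in>S. g' (sB (sA x)) = l * g' x"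
    proof
      fix x assume x: "x \<in> S"
      have "hm (sA x) = l * hm (sB x)" using hme sBS s22 x by metis
      then show "g' (sB (sA x)) = l * g' x"
        unfolding g'_def using s22 sAS x hpe by (simp add: algebra_simps)
    qed
  qed
  define psi where "psi x = hp x + hm x - (1 + r) * hc x" for x
  have psib: "\<forall>x\<in>S. \<bar>psi x\<bar> \<le> Cp + Cm + 3 * Cc"
  proof
    fix x assume x: "x \<in> S"
    have "psi x = ep x + em x - (1 + r) * ec x"
      unfolding psi_def ep_def em_def ec_def al_def by (simp add: algebra_simps)
    moreover have "\<bar>(1 + r) * ec x\<bar> \<le> 3 * Cc"
    proof -
      have "\<bar>(1 + r) * ec x\<bar> = (1 + r) * \<bar>ec x\<bar>" using r0 by (simp add: abs_mult)
      also have "\<dots> \<le> 3 * \<bar>ec x\<bar>" using r1 by (intro mult_right_mono) auto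
      moreover have "3 * \<bar>ec x\<bar> \<le> 3 * Cc" using ec x by simp
      ultimately show ?thesis by linarith
    qed
    ultimately show "\<bar>psi x\<bar> \<le> Cp + Cm + 3 * Cc" using ep em x by fastforce
  qed
  have psi0: "\<forall>x\<in>S. psi x = 0"
  proof (rule decay_sum[OF psib sAS sBS])
    show "\<forall>x\<in>S. psi (sA x) + psi (sB x) = 4 * psi x"
    proof
      fix x assume x: "x \<in> S"
      have a1: "hp (sA x) = be * hm x" using g0 x g_def by simp
      have a2: "hp (sB x) = l * hp (sA x)" using hpe sAS s11 x by metis
      have a3: "hm (sB x) = be * hp x" using g0' x g'_def by simp
      have a4: "hm (sA x) = l * hm (sB x)" using hme sBS s22 x by metis
      have "hp (sA x) + hp (sB x) = be * (1 + l) * hm x" using a1 a2 by (simp add: algebra_simps)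
      then have b1: "hp (sA x) + hp (sB x) = 4 * hm x" using bel by simp
      have "hm (sA x) + hm (sB x) = be * (1 + l) * hp x" using a3 a4 by (simp add: algebra_simps)
      then have b2: "hm (sA x) + hm (sB x) = 4 * hp x" using bel by simp
      have b3: "hc (sA x) + hc (sB x) = 4 * hc x" using hc_eq x by simp
      have b4: "(1 + r) * hc (sA x) + (1 + r) * hc (sB x) = 4 * ((1 + r) * hc x)"
        using b3 by (metis distrib_left mult.left_commute)
      show "psi (sA x) + psi (sB x) = 4 * psi x"
        unfolding psi_def using b1 b2 b4 by (simp only: right_diff_distrib distrib_left)
    qed
  qed
  show ?thesis using psi0 unfolding psi_def r_def by simp
qed



definition Lf :: "(nat \<Rightarrow> complex) \<Rightarrow> (nat \<Rightarrow> complex) \<Rightarrow> complex" where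
  "Lf c w = (\<Sum>j<3. c j * w j)"
definition Qf :: "(nat \<Rightarrow> nat \<Rightarrow> complex) \<Rightarrow> (nat \<Rightarrow> complex) \<Rightarrow> complex" where
  "Qf d w = (\<Sum>k<3. \<Sum>l<3. d k l * w k * w l)"
definition Bf :: "(nat \<Rightarrow> nat \<Rightarrow> complex) \<Rightarrow> (nat \<Rightarrow> complex) \<Rightarrow> (nat \<Rightarrow> complex) \<Rightarrow> complex" where
  "Bf d v w = (\<Sum>k<3. \<Sum>l<3. d k l * (v k * w l + w k * v l))"

lemma sum3: "(\<Sum>i<(3::nat). f i) = f 0 + f 1 + f 2"
  by (simp add: numeral_3_eq_3 numeral_2_eq_2 lessThan_Suc add_ac)

lemma Lf_comb: "Lf c (\<lambda>i. \<alpha> * v i + \<beta> * w i) = \<alpha> * Lf c v + \<beta> * Lf c w"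
  unfolding Lf_def sum3 by algebra

lemma Qf_comb: "Qf d (\<lambda>i. \<alpha> * v i + \<beta> * w i) = \<alpha>\<^sup>2 * Qf d v + \<alpha> * \<beta> * Bf d v w + \<beta>\<^sup>2 * Qf d w"
  unfolding Qf_def Bf_def sum3 by (simp add: power2_eq_square) algebra

lemma Bf_lin: "Bf d v (\<lambda>i. w i + s * z i) = Bf d v w + s * Bf d v z"
  unfolding Bf_def sum3 by algebra

lemma Lf_scale: "Lf c (\<lambda>i. k * w i) = k * Lf c w"
  unfolding Lf_def sum3 by algebra

lemma Qf_scale: "Qf d (\<lambda>i. k * w i) = k\<^sup>2 * Qf d w"
  unfolding Qf_def sum3 by (simp add: power2_eq_square) algebra

lemma Lf_cong: "(\<And>i. i < 3 \<Longrightarrow> v i = w i) \<Longrightarrow> Lf c v = Lf c w"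
  unfolding Lf_def by (rule sum.cong) auto

lemma Qf_cong: "(\<And>i. i < 3 \<Longrightarrow> v i = w i) \<Longrightarrow> Qf d v = Qf d w"
  unfolding Qf_def by (intro sum.cong refl) auto

lemma P2D: assumes "p \<in> P2"
  shows "\<forall>i\<ge>3. p i = 0" "\<forall>i<3. algebraic (p i)" "\<exists>j<3. p j = 1 \<and> (\<forall>i<j. p i = 0)"
  using assms unfolding P2_def by auto

lemma P2_prop:
  assumes p: "p \<in> P2" and q: "q \<in> P2" and k: "\<forall>i<3. q i = k * p i"
  shows "p = q"
proof -
  obtain j where j: "j < 3" "p j = 1" "\<forall>i<j. p i = 0" using P2D(3)[OF p] by blast
  obtain j' where j': "j' < 3" "q j' = 1" "\<forall>i<j'. q i = 0" using P2D(3)[OF q] by blast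
  have "j = j'"
  proof (rule ccontr)
    assume "j \<noteq> j'"
    then consider "j < j'" | "j' < j" by linarith
    then show False
    proof cases
      case 1
      then have "q j = 0" using j' by auto
      then have "k = 0" using k j by auto
      then show False using k j' by auto
    next
      case 2
      then have "p j' = 0" using j by auto
      then show False using k j' by auto
    qed
  qed
  then have "k = 1" using k j j' by auto
  show "p = q"
  proof
    fix i show "p i = q i"
      using \<open>k = 1\<close> k P2D(1)[OF p] P2D(1)[OF q] by (cases "i < 3") auto
  qed
qed

lemma indep2:
  assumes p: "p \<in> P2" and q: "q \<in> P2" and pq: "p \<noteq> q"
    and c: "\<forall>i<3. \<alpha> * p i + \<beta> * q i = 0"
  shows "\<alpha> = 0 \<and> \<beta> = 0"
proof -
  have "\<beta> = 0"
  proof (rule ccontr)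
    assume b: "\<beta> \<noteq> 0"
    have "\<forall>i<3. q i = (- \<alpha> / \<beta>) * p i"
      using c b by (auto simp: field_simps eq_neg_iff_add_eq_0 add.commute)
    then show False using P2_prop[OF p q] pq by blast
  qed
  moreover obtain j where j: "j < 3" "p j = 1" using P2D(3)[OF p] by blast
  ultimately show ?thesis using c by force
qed

definition nrm :: "(nat \<Rightarrow> complex) \<Rightarrow> nat \<Rightarrow> complex" where
  "nrm w = (\<lambda>i. w i / w (LEAST j. w j \<noteq> 0))"

definition good :: "(nat \<Rightarrow> complex) \<Rightarrow> bool" where
  "good w \<longleftrightarrow> (\<forall>i\<ge>3. w i = 0) \<and> (\<exists>i<3. w i \<noteq> 0) \<and> (\<forall>i<3. algebraic (w i))"

lemma nrm_props:
  assumes "good w"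
  shows "nrm w \<in> P2" "\<exists>k. k \<noteq> 0 \<and> (\<forall>i. nrm w i = k * w i)"
proof -
  define j where "j = (LEAST j. w j \<noteq> 0)"
  obtain i0 where i0: "i0 < 3" "w i0 \<noteq> 0" using assms unfolding good_def by blast
  have wj: "w j \<noteq> 0" unfolding j_def by (rule LeastI[of "\<lambda>j. w j \<noteq> 0" i0]) (rule i0(2))
  have ji: "j \<le> i0" unfolding j_def by (rule Least_le[of "\<lambda>j. w j \<noteq> 0" i0]) (rule i0(2))
  have lt: "\<forall>i<j. w i = 0"
  proof (intro allI impI)
    fix i assume "i < j" then show "w i = 0" unfolding j_def by (rule not_less_Least[of i "\<lambda>j. w j \<noteq> 0", simplified])
  qed
  have nw: "nrm w = (\<lambda>i. w i / w j)" unfolding nrm_def j_def by simp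
  show "\<exists>k. k \<noteq> 0 \<and> (\<forall>i. nrm w i = k * w i)"
    using wj by (intro exI[of _ "inverse (w j)"]) (simp add: nw divide_inverse)
  show "nrm w \<in> P2" unfolding P2_def nw
  proof (intro CollectI conjI allI impI)
    fix i :: nat assume "3 \<le> i" then show "w i / w j = 0" using assms unfolding good_def by simp
  next
    have j3: "j < 3" using ji i0 by linarith
    fix i :: nat assume "i < 3" then show "algebraic (w i / w j)"
      using assms j3 unfolding good_def by (intro algebraic_divide) auto
  next
    have j3: "j < 3" using ji i0 by linarith
    show "\<exists>j'<3. w j' / w j = 1 \<and> (\<forall>i<j'. w i / w j = 0)"
      using wj lt j3 by (intro exI[of _ j]) simp
  qed
qed

lemma nrm_inj:
  assumes "good w" "good w'" "nrm w = nrm w'"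
  shows "\<exists>k. \<forall>i. w i = k * w' i"
proof -
  obtain k where k: "k \<noteq> 0" "\<forall>i. nrm w i = k * w i" using nrm_props(2)[OF assms(1)] by blast
  obtain k' where k': "\<forall>i. nrm w' i = k' * w' i" using nrm_props(2)[OF assms(2)] by blast
  show ?thesis using k k' assms(3) by (intro exI[of _ "k' / k"]) (metis nonzero_mult_div_cancel_left times_divide_eq_left)
qed

definition Fib :: "(nat \<Rightarrow> complex) \<Rightarrow> (nat \<Rightarrow> nat \<Rightarrow> complex) \<Rightarrow> (nat \<Rightarrow> complex) set" where
  "Fib c d = {w \<in> P2. Lf c w = 0 \<and> Qf d w = 0}"

lemma nrm_in_Fib:
  assumes "good w" "Lf c w = 0" "Qf d w = 0"
  shows "nrm w \<in> Fib c d"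
proof -
  obtain k where k: "\<forall>i. nrm w i = k * w i" using nrm_props(2)[OF assms(1)] by blast
  have e: "nrm w = (\<lambda>i. k * w i)" using k by auto
  show ?thesis unfolding Fib_def using nrm_props(1)[OF assms(1)] assms(2,3)
    by (simp add: e Lf_scale Qf_scale)
qed

lemma infinite_inj_image:
  assumes "inj_on f T" "infinite T" "f ` T \<subseteq> F" shows "infinite F"
  using assms finite_imageD finite_subset by metis

lemma alg_Bf:
  assumes "\<forall>k<3. \<forall>l<3. algebraic (d k l)" "v \<in> P2" "w \<in> P2"
  shows "algebraic (Bf d v w)"
  using assms P2D(2)[OF assms(2)] P2D(2)[OF assms(3)] unfolding Bf_def
  by (intro algebraic_sum algebraic_times algebraic_plus) auto




lemma line_case:
  assumes v1: "v1 \<in> Fib c d" and v2: "v2 \<in> Fib c d" and ne: "v1 \<noteq> v2"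
    and B: "Bf d v1 v2 = 0"
  shows "infinite (Fib c d)"
proof -
  have p1: "v1 \<in> P2" and p2: "v2 \<in> P2" using v1 v2 unfolding Fib_def by auto
  define w where "w t = (\<lambda>i. 1 * v1 i + of_nat t * v2 i)" for t :: nat
  have good: "good (w t)" for t
    unfolding good_def
  proof (intro conjI allI impI)
    fix i :: nat assume "3 \<le> i" then show "w t i = 0" using P2D(1)[OF p1] P2D(1)[OF p2] unfolding w_def by simp
  next
    show "\<exists>i<3. w t i \<noteq> 0"
    proof (rule ccontr)
      assume "\<not> ?thesis"
      then have "\<forall>i<3. 1 * v1 i + of_nat t * v2 i = 0" unfolding w_def by auto
      then show False using indep2[OF p1 p2 ne, of 1 "of_nat t"] by simp
    qed
  next
    fix i :: nat assume i: "i < 3"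
    have "algebraic (v1 i)" "algebraic (v2 i)" using P2D(2)[OF p1] P2D(2)[OF p2] i by auto
    then show "algebraic (w t i)"
      unfolding w_def by (simp add: algebraic_plus algebraic_times)
  qed
  have L: "Lf c (w t) = 0" for t
    using v1 v2 unfolding w_def Lf_comb unfolding Fib_def by simp
  have Q: "Qf d (w t) = 0" for t
    using v1 v2 B unfolding w_def Qf_comb unfolding Fib_def by simp
  show ?thesis
  proof (rule infinite_inj_image[of "\<lambda>t. nrm (w t)" UNIV])
    show "range (\<lambda>t. nrm (w t)) \<subseteq> Fib c d" using nrm_in_Fib[OF good L Q] by auto
    show "infinite (UNIV :: nat set)" by simp
    show "inj (\<lambda>t. nrm (w t))"
    proof (rule injI)
      fix s t assume "nrm (w s) = nrm (w t)"
      then obtain k where k: "\<forall>i. w s i = k * w t i" using nrm_inj good by blast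
      have "\<forall>i<3. (1 - k) * v1 i + (of_nat s - k * of_nat t) * v2 i = 0"
        using k unfolding w_def by (auto simp: algebra_simps)
      then have "1 - k = 0 \<and> of_nat s - k * of_nat t = (0::complex)" using indep2[OF p1 p2 ne] by blast
      then have "k = 1" "of_nat s = (k * of_nat t :: complex)" by auto
      then show "s = t" by simp
    qed
  qed
qed

lemma fibre_le2:
  assumes fin: "finite (Fib c d)"
    and dalg: "\<forall>k<3. \<forall>l<3. algebraic (d k l)"
    and v1: "v1 \<in> Fib c d" and v2: "v2 \<in> Fib c d" and v3: "v3 \<in> Fib c d"
  shows "v1 = v2 \<or> v1 = v3 \<or> v2 = v3"
proof (rule ccontr)
  assume "\<not> ?thesis"
  then have n12: "v1 \<noteq> v2" and n13: "v1 \<noteq> v3" and n23: "v2 \<noteq> v3" by auto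
  have p1: "v1 \<in> P2" and p2: "v2 \<in> P2" and p3: "v3 \<in> P2" using v1 v2 v3 unfolding Fib_def by auto
  have L1: "Lf c v1 = 0" and L2: "Lf c v2 = 0" and L3: "Lf c v3 = 0"
    and Q1: "Qf d v1 = 0" and Q2: "Qf d v2 = 0" and Q3: "Qf d v3 = 0"
    using v1 v2 v3 unfolding Fib_def by auto
  define B12 where "B12 = Bf d v1 v2"
  define B13 where "B13 = Bf d v1 v3"
  define B23 where "B23 = Bf d v2 v3"
  have B12: "B12 \<noteq> 0" using line_case[OF v1 v2 n12] fin B12_def by auto
  have B13: "B13 \<noteq> 0" using line_case[OF v1 v3 n13] fin B13_def by auto
  have B23: "B23 \<noteq> 0" using line_case[OF v2 v3 n23] fin B23_def by auto
  show False
  proof (cases "\<exists>\<alpha> \<beta> \<gamma>. (\<alpha> \<noteq> 0 \<or> \<beta> \<noteq> 0 \<or> \<gamma> \<noteq> 0) \<and> (\<forall>i<3. \<alpha> * v1 i + \<beta> * v2 i + \<gamma> * v3 i = 0)")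
    case True
    then obtain \<alpha> \<beta> \<gamma> where nz: "\<alpha> \<noteq> 0 \<or> \<beta> \<noteq> 0 \<or> \<gamma> \<noteq> 0"
      and rel: "\<forall>i<3. \<alpha> * v1 i + \<beta> * v2 i + \<gamma> * v3 i = 0" by blast
    have g: "\<gamma> \<noteq> 0"
    proof
      assume "\<gamma> = 0"
      then have "\<forall>i<3. \<alpha> * v1 i + \<beta> * v2 i = 0" using rel by simp
      then have "\<alpha> = 0 \<and> \<beta> = 0" by (rule indep2[OF p1 p2 n12])
      then show False using nz \<open>\<gamma> = 0\<close> by auto
    qed
    define a' where "a' = - \<alpha> / \<gamma>"
    define b' where "b' = - \<beta> / \<gamma>"
    have v3e: "\<forall>i<3. v3 i = a' * v1 i + b' * v2 i"
    proof (intro allI impI)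
      fix i :: nat assume "i < 3"
      then have h: "\<alpha> * v1 i + \<beta> * v2 i + \<gamma> * v3 i = 0" using rel by blast
      have e: "\<gamma> * v3 i = - \<alpha> * v1 i + - \<beta> * v2 i" using h by algebra
      have "v3 i = (- \<alpha> * v1 i + - \<beta> * v2 i) / \<gamma>" using g e by (metis nonzero_mult_div_cancel_left)
      then show "v3 i = a' * v1 i + b' * v2 i" unfolding a'_def b'_def by (simp add: add_divide_distrib diff_divide_distrib)
    qed
    have "Qf d v3 = Qf d (\<lambda>i. a' * v1 i + b' * v2 i)" using v3e by (intro Qf_cong) auto
    also have "\<dots> = a' * b' * B12" unfolding Qf_comb Q1 Q2 B12_def by simp
    finally have "a' * b' = 0" using Q3 B12 by simp
    then consider "a' = 0" | "b' = 0" by auto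
    then show False
    proof cases
      case 1
      then have "\<forall>i<3. v3 i = b' * v2 i" using v3e by simp
      then show False using P2_prop[OF p2 p3, of b'] n23 by blast
    next
      case 2
      then have "\<forall>i<3. v3 i = a' * v1 i" using v3e by simp
      then show False using P2_prop[OF p1 p3, of a'] n13 by blast
    qed
  next
    case False
    then have ind: "\<And>\<alpha> \<beta> \<gamma>. (\<forall>i<3. \<alpha> * v1 i + \<beta> * v2 i + \<gamma> * v3 i = 0) \<Longrightarrow> \<alpha> = 0 \<and> \<beta> = 0 \<and> \<gamma> = 0"
      by blast
    define X where "X s = B12 + of_nat s * B13" for s :: nat
    define w where "w s = (\<lambda>i. v2 i + of_nat s * v3 i)" for s :: nat
    define p where "p s = (\<lambda>i. (of_nat s * B23) * v1 i + (- X s) * w s i)" for s :: nat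
    have pe: "p s i = (of_nat s * B23) * v1 i + (- X s) * v2 i + (- X s * of_nat s) * v3 i" for s i
      unfolding p_def w_def by (simp add: algebra_simps)
    have Qw: "Qf d (w s) = of_nat s * B23" for s
    proof -
      have "Qf d (w s) = Qf d (\<lambda>i. 1 * v2 i + of_nat s * v3 i)" unfolding w_def by simp
      also have "\<dots> = of_nat s * B23" unfolding Qf_comb Q2 Q3 B23_def by simp
      finally show ?thesis .
    qed
    have Bw: "Bf d v1 (w s) = X s" for s
      unfolding w_def X_def B12_def B13_def by (simp add: Bf_lin)
    have Lw: "Lf c (w s) = 0" for s
    proof -
      have "Lf c (w s) = Lf c (\<lambda>i. 1 * v2 i + of_nat s * v3 i)" unfolding w_def by simp
      also have "\<dots> = 0" unfolding Lf_comb L2 L3 by simp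
      finally show ?thesis .
    qed
    have Lp: "Lf c (p s) = 0" for s
      unfolding p_def Lf_comb L1 Lw by simp
    have Qp: "Qf d (p s) = 0" for s
      unfolding p_def Qf_comb Q1 Qw Bw by (simp add: power2_eq_square)
    define T where "T = {s. X s \<noteq> 0}"
    have good: "good (p s)" if s: "s \<in> T" for s
      unfolding good_def
    proof (intro conjI allI impI)
      fix i :: nat assume "3 \<le> i" then show "p s i = 0"
        using P2D(1)[OF p1] P2D(1)[OF p2] P2D(1)[OF p3] by (simp add: pe)
    next
      show "\<exists>i<3. p s i \<noteq> 0"
      proof (rule ccontr)
        assume "\<not> ?thesis"
        then have "\<forall>i<3. (of_nat s * B23) * v1 i + (- X s) * v2 i + (- X s * of_nat s) * v3 i = 0"
          using pe by auto
        from ind[OF this] have "- X s = 0" by blast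
        then show False using s unfolding T_def by simp
      qed
    next
      fix i :: nat assume i: "i < 3"
      have "algebraic (v1 i)" "algebraic (v2 i)" "algebraic (v3 i)"
        using P2D(2)[OF p1] P2D(2)[OF p2] P2D(2)[OF p3] i by auto
      then show "algebraic (p s i)"
        using alg_Bf[OF dalg p1 p2] alg_Bf[OF dalg p1 p3]
          alg_Bf[OF dalg p2 p3] unfolding pe X_def B12_def B13_def B23_def
        by (simp add: algebraic_plus algebraic_times algebraic_diff)
    qed
    have Tinf: "infinite T"
    proof -
      have fz: "finite {s. X s = 0}"
      proof (cases "{s. X s = 0} = {}")
        case True then show ?thesis by simp
      next
        case False
        then obtain s0 where s0: "X s0 = 0" by auto
        have "{s. X s = 0} \<subseteq> {s0}"
        proof
          fix s assume "s \<in> {s. X s = 0}"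
          then have "X s = 0" by simp
          then have "(of_nat s - of_nat s0) * B13 = 0" using s0 unfolding X_def by algebra
          then have "of_nat s = (of_nat s0 :: complex)" using B13 by simp
          then show "s \<in> {s0}" by simp
        qed
        then show ?thesis using finite_subset by blast
      qed
      have "T = UNIV - {s. X s = 0}" unfolding T_def by auto
      then show ?thesis using Diff_infinite_finite[OF fz] by simp
    qed
    have "infinite (Fib c d)"
    proof (rule infinite_inj_image[of "\<lambda>s. nrm (p s)" T])
      show "(\<lambda>s. nrm (p s)) ` T \<subseteq> Fib c d" using nrm_in_Fib[OF good Lp Qp] by auto
      show "infinite T" by (rule Tinf)
      show "inj_on (\<lambda>s. nrm (p s)) T"
      proof (rule inj_onI)
        fix s t assume s: "s \<in> T" and t: "t \<in> T" and e: "nrm (p s) = nrm (p t)"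
        obtain k where k: "\<forall>i. p s i = k * p t i" using nrm_inj[OF good[OF s] good[OF t] e] by blast
        have "\<forall>i<3. (of_nat s * B23 - k * (of_nat t * B23)) * v1 i + (- X s + k * X t) * v2 i
                    + (- X s * of_nat s + k * (X t * of_nat t)) * v3 i = 0"
        proof (intro allI impI)
          fix i :: nat
          have "p s i = k * p t i" using k by blast
          then show "(of_nat s * B23 - k * (of_nat t * B23)) * v1 i + (- X s + k * X t) * v2 i
                    + (- X s * of_nat s + k * (X t * of_nat t)) * v3 i = 0"
            unfolding pe by algebra
        qed
        then have c: "- X s + k * X t = 0" "- X s * of_nat s + k * (X t * of_nat t) = 0"
          using ind by blast+
        then have "X s * (of_nat s - of_nat t) = 0" by algebra
        then have "of_nat s = (of_nat t :: complex)" using s unfolding T_def by simp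
        then show "s = t" by simp
      qed
    qed
    then show False using fin by simp
  qed
qed


lemma form11_fib1: "form11 a u v = Lf (\<lambda>j. \<Sum>i<3. a i j * u i) v"
  unfolding form11_def Lf_def sum3 by algebra

lemma form11_fib2: "form11 a u v = Lf (\<lambda>i. \<Sum>j<3. a i j * v j) u"
  unfolding form11_def Lf_def sum3 by algebra

lemma form22_fib1: "form22 b u v = Qf (\<lambda>k l. \<Sum>i<3. \<Sum>j<3. b i j k l * u i * u j) v"
  unfolding form22_def Qf_def sum3 by algebra

lemma form22_fib2: "form22 b u v = Qf (\<lambda>i j. \<Sum>k<3. \<Sum>l<3. b i j k l * v k * v l) u"
  unfolding form22_def Qf_def sum3 by algebra

lemma fib1_eq: "u \<in> P2 \<Longrightarrow> {v. (u, v) \<in> surf a b} =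
    Fib (\<lambda>j. \<Sum>i<3. a i j * u i) (\<lambda>k l. \<Sum>i<3. \<Sum>j<3. b i j k l * u i * u j)"
  unfolding surf_def Fib_def by (auto simp: form11_fib1 form22_fib1)

lemma fib2_eq: "v \<in> P2 \<Longrightarrow> {u. (u, v) \<in> surf a b} =
    Fib (\<lambda>i. \<Sum>j<3. a i j * v j) (\<lambda>i j. \<Sum>k<3. \<Sum>l<3. b i j k l * v k * v l)"
  unfolding surf_def Fib_def by (auto simp: form11_fib2 form22_fib2)

lemma other_pt_props:
  assumes v: "v \<in> A" and tri: "\<forall>x\<in>A. \<forall>y\<in>A. \<forall>z\<in>A. x = y \<or> x = z \<or> y = z"
  shows "other_pt A v \<in> A \<and> other_pt A (other_pt A v) = v"
proof (cases "\<exists>w\<in>A. w \<noteq> v")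
  case True
  then obtain w where w: "w \<in> A" "w \<noteq> v" by blast
  have th1: "(THE w. w \<in> A \<and> w \<noteq> v) = w"
  proof (rule the_equality)
    show "w \<in> A \<and> w \<noteq> v" using w by simp
    fix w' assume "w' \<in> A \<and> w' \<noteq> v"
    then show "w' = w" using tri v w by metis
  qed
  have o1: "other_pt A v = w" unfolding other_pt_def using True th1 by simp
  have th2: "(THE x. x \<in> A \<and> x \<noteq> w) = v"
  proof (rule the_equality)
    show "v \<in> A \<and> v \<noteq> w" using w v by simp
    fix w' assume "w' \<in> A \<and> w' \<noteq> w"
    then show "w' = v" using tri v w by metis
  qed
  have o2: "other_pt A w = v" unfolding other_pt_def using th2 v w by auto
  show ?thesis using o1 o2 w by simp
next
  case False
  then have "other_pt A v = v" unfolding other_pt_def by auto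
  then show ?thesis using v by simp
qed

lemma alg_d1:
  assumes "\<forall>i<3. \<forall>j<3. \<forall>k<3. \<forall>l<3. algebraic (b i j k l)" "u \<in> P2"
  shows "\<forall>k<3. \<forall>l<3. algebraic ((\<lambda>k l. \<Sum>i<3. \<Sum>j<3. b i j k l * u i * u j) k l)"
  using assms P2D(2)[OF assms(2)] by (auto intro!: algebraic_sum algebraic_times)

lemma alg_d2:
  assumes "\<forall>i<3. \<forall>j<3. \<forall>k<3. \<forall>l<3. algebraic (b i j k l)" "v \<in> P2"
  shows "\<forall>i<3. \<forall>j<3. algebraic ((\<lambda>i j. \<Sum>k<3. \<Sum>l<3. b i j k l * v k * v l) i j)"
  using assms P2D(2)[OF assms(2)] by (auto intro!: algebraic_sum algebraic_times)

lemma sigma1_props: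
  assumes S: "S = surf a b" and cb: "\<forall>i<3. \<forall>j<3. \<forall>k<3. \<forall>l<3. algebraic (b i j k l)"
    and fin: "\<forall>u\<in>P2. finite {v. (u, v) \<in> S}" and x: "x \<in> S"
  shows "sigma1 S x \<in> S \<and> sigma1 S (sigma1 S x) = x \<and> fst (sigma1 S x) = fst x"
proof -
  obtain u v where xuv: "x = (u, v)" by fastforce
  have u: "u \<in> P2" using x unfolding xuv S surf_def by auto
  define A where "A = {w. (u, w) \<in> S}"
  have vA: "v \<in> A" using x unfolding A_def xuv by simp
  have tri: "\<forall>x\<in>A. \<forall>y\<in>A. \<forall>z\<in>A. x = y \<or> x = z \<or> y = z"
  proof -
    have AF: "A = Fib (\<lambda>j. \<Sum>i<3. a i j * u i) (\<lambda>k l. \<Sum>i<3. \<Sum>j<3. b i j k l * u i * u j)"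
      unfolding A_def S by (rule fib1_eq[OF u])
    have finA: "finite A" using fin u unfolding A_def by blast
    show ?thesis using fibre_le2[OF finA[unfolded AF] alg_d1[OF cb u]] unfolding AF by blast
  qed
  have o: "other_pt A v \<in> A \<and> other_pt A (other_pt A v) = v" by (rule other_pt_props[OF vA tri])
  have s1: "sigma1 S x = (u, other_pt A v)" unfolding sigma1_def xuv A_def by simp
  have s1': "sigma1 S (u, other_pt A v) = (u, other_pt A (other_pt A v))" unfolding sigma1_def A_def by simp
  show ?thesis using o s1 s1' xuv unfolding A_def by simp
qed

lemma sigma2_props:
  assumes S: "S = surf a b" and cb: "\<forall>i<3. \<forall>j<3. \<forall>k<3. \<forall>l<3. algebraic (b i j k l)"
    and fin: "\<forall>v\<in>P2. finite {u. (u, v) \<in> S}" and x: "x \<in> S"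
  shows "sigma2 S x \<in> S \<and> sigma2 S (sigma2 S x) = x \<and> snd (sigma2 S x) = snd x"
proof -
  obtain u v where xuv: "x = (u, v)" by fastforce
  have v: "v \<in> P2" using x unfolding xuv S surf_def by auto
  define A where "A = {w. (w, v) \<in> S}"
  have uA: "u \<in> A" using x unfolding A_def xuv by simp
  have tri: "\<forall>x\<in>A. \<forall>y\<in>A. \<forall>z\<in>A. x = y \<or> x = z \<or> y = z"
  proof -
    have AF: "A = Fib (\<lambda>i. \<Sum>j<3. a i j * v j) (\<lambda>i j. \<Sum>k<3. \<Sum>l<3. b i j k l * v k * v l)"
      unfolding A_def S by (rule fib2_eq[OF v])
    have finA: "finite A" using fin v unfolding A_def by blast
    show ?thesis using fibre_le2[OF finA[unfolded AF] alg_d2[OF cb v]] unfolding AF by blast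
  qed
  have o: "other_pt A u \<in> A \<and> other_pt A (other_pt A u) = u" by (rule other_pt_props[OF uA tri])
  have s2: "sigma2 S x = (other_pt A u, v)" unfolding sigma2_def xuv A_def by simp
  have s2': "sigma2 S (other_pt A u, v) = (other_pt A (other_pt A u), v)" unfolding sigma2_def A_def by simp
  show ?thesis using o s2 s2' xuv unfolding A_def by simp
qed

theorem proposition1p4p1:
  fixes a :: "nat \<Rightarrow> nat \<Rightarrow> complex"
    and b :: "nat \<Rightarrow> nat \<Rightarrow> nat \<Rightarrow> nat \<Rightarrow> complex"
    and hp hm hc :: "(nat \<Rightarrow> complex) \<times> (nat \<Rightarrow> complex) \<Rightarrow> real"
  defines "S \<equiv> surf a b"
  assumes coeffs_a: "\<forall>i<3. \<forall>j<3. algebraic (a i j)"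
    and coeffs_b: "\<forall>i<3. \<forall>j<3. \<forall>k<3. \<forall>l<3. algebraic (b i j k l)"
    and smooth: "smooth_ci a b"
    and finite_p1: "\<forall>u\<in>P2. finite {v. (u, v) \<in> S}"
    and finite_p2: "\<forall>v\<in>P2. finite {u. (u, v) \<in> S}"
    and hp_ht: "bdd_diff_on S hp
                  (\<lambda>(u, v). (2 + sqrt 3) * weil_height u - weil_height v)"
    and hp_eq: "\<forall>x\<in>S. hp (sigma2 S (sigma1 S x)) = (7 + 4 * sqrt 3) * hp x"
    and hm_ht: "bdd_diff_on S hm
                  (\<lambda>(u, v). - weil_height u + (2 + sqrt 3) * weil_height v)"
    and hm_eq: "\<forall>x\<in>S. hm (sigma1 S (sigma2 S x)) = (7 + 4 * sqrt 3) * hm x"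
    and hc_ht: "bdd_diff_on S hc (\<lambda>(u, v). weil_height u + weil_height v)"
    and hc_eq: "\<forall>x\<in>S. hc (sigma1 S x) + hc (sigma2 S x) = 4 * hc x"
  shows "\<forall>x\<in>S. hp x + hm x = (1 + sqrt 3) * hc x"
proof -
  have Sd: "S = surf a b" unfolding S_def ..
  have p1: "\<forall>x\<in>S. sigma1 S x \<in> S \<and> sigma1 S (sigma1 S x) = x \<and> fst (sigma1 S x) = fst x"
    using sigma1_props[OF Sd coeffs_b finite_p1] by blast
  have p2: "\<forall>x\<in>S. sigma2 S x \<in> S \<and> sigma2 S (sigma2 S x) = x \<and> snd (sigma2 S x) = snd x"
    using sigma2_props[OF Sd coeffs_b finite_p2] by blast
  show ?thesis
  proof (rule abstract_main[where H = "\<lambda>x. weil_height (fst x)" and V = "\<lambda>x. weil_height (snd x)"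
        and sA = "sigma1 S" and sB = "sigma2 S"])
    show "\<forall>x\<in>S. sigma1 S x \<in> S" "\<forall>x\<in>S. sigma2 S x \<in> S"
      "\<forall>x\<in>S. sigma1 S (sigma1 S x) = x" "\<forall>x\<in>S. sigma2 S (sigma2 S x) = x"
      "\<forall>x\<in>S. weil_height (fst (sigma1 S x)) = weil_height (fst x)"
      "\<forall>x\<in>S. weil_height (snd (sigma2 S x)) = weil_height (snd x)"
      using p1 p2 by auto
    show "\<exists>C. \<forall>x\<in>S. \<bar>hp x - ((2 + sqrt 3) * weil_height (fst x) - weil_height (snd x))\<bar> \<le> C"
      using hp_ht unfolding bdd_diff_on_def by (simp add: case_prod_beta)
    show "\<exists>C. \<forall>x\<in>S. \<bar>hm x - (- weil_height (fst x) + (2 + sqrt 3) * weil_height (snd x))\<bar> \<le> C"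
      using hm_ht unfolding bdd_diff_on_def by (simp add: case_prod_beta)
    show "\<exists>C. \<forall>x\<in>S. \<bar>hc x - (weil_height (fst x) + weil_height (snd x))\<bar> \<le> C"
      using hc_ht unfolding bdd_diff_on_def by (simp add: case_prod_beta)
  qed (use hp_eq hm_eq hc_eq in auto)
qed

end
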